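(* Let $G$ be a closed and continuous cyclic graph with vertex set $V$ and $\mathrm{wf}(G)=\frac pq$. Then for all $v\in V$ and $i,j\ge0$: (i) $f_i(v)\in V$; (ii) $\gamma_{i+j}(v)=\gamma_i(v)+\gamma_j(f_i(v))$; (iii) $f_{i+j}(v)=f_j(f_i(v))$.
   Context: $S^1=\mathbb{R}/\mathbb{Z}$ (points identified with $[0,1)$); $\preceq$/$\prec$ clockwise order; $\vec d(p,q)\in[0,1)$ clockwise distance. A directed graph has no loops and no pair of opposite edges; $N^+[G,v]=\{v\}\cup\{w:v\to w\}$. A directed graph with vertex set $V\subseteq S^1$ is cyclic if whenever $v\to u$ is an edge, $v\to w$ and $w\to u$ are edges for all $w\in V$ with $v\prec w\prec u\prec v$. Winding fraction: for finite cyclic $G$, $\mathrm{wf}(G)=\sup\{k/n:\exists$ cyclic homomorphism $C_n^k\to G\}$ ($C_n^k$: vertices $0..n-1$, edges $i\to i+s\bmod n$, $1\le s\le k<n/2$); in general, the supremum over finite induced subgraphs. For $m\ge1$, $\gamma_m(v_0)=\sup\{\sum_{i=0}^{m-1}\vec d(v_i,v_{i+1}): v_{i+1}\in N^+[G,v_i]\}$, $\gamma_0=0$, and $f_m(v)=(v+\gamma_m(v))\bmod 1\in S^1$. $G$ is closed if $V$ is closed in $S^1$, and continuous if every $\gamma_m:V\to\mathbb{R}$ is continuous. *)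

theory Defs
  imports "HOL-Analysis.Analysis"
begin

text \<open>Points of S^1 = R/Z are represented by their representatives in [0,1).
  A directed graph is a vertex set V (subset of [0,1)) with an edge predicate E.\<close>

definition cdist :: "real \<Rightarrow> real \<Rightarrow> real" where
  "cdist p q = frac (q - p)"

definition cbetween :: "real \<Rightarrow> real \<Rightarrow> real \<Rightarrow> bool" where
  "cbetween v w u \<longleftrightarrow> 0 < cdist v w \<and> cdist v w < cdist v u"

definition digraph :: "real set \<Rightarrow> (real \<Rightarrow> real \<Rightarrow> bool) \<Rightarrow> bool" where
  "digraph V E \<longleftrightarrow> V \<subseteq> {0..<1} \<and>
     (\<forall>u v. E u v \<longrightarrow> u \<in> V \<and> v \<in> V \<and> u \<noteq> v \<and> \<not> E v u)"

definition cyclic_graph :: "real set \<Rightarrow> (real \<Rightarrow> real \<Rightarrow> bool) \<Rightarrow> bool" where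
  "cyclic_graph V E \<longleftrightarrow> digraph V E \<and>
     (\<forall>v\<in>V. \<forall>u\<in>V. \<forall>w\<in>V. E v u \<and> cbetween v w u \<longrightarrow> E v w \<and> E w u)"

definition out_nbhd :: "(real \<Rightarrow> real \<Rightarrow> bool) \<Rightarrow> real \<Rightarrow> real set" where
  "out_nbhd E v = {v} \<union> {w. E v w}"

text \<open>Cyclic homomorphism C_n^k \<rightarrow> (W, E restricted to W): a graph homomorphism
  whose image points h 0, ..., h (n-1) go once around the circle in clockwise order.\<close>
definition cyclic_hom :: "nat \<Rightarrow> nat \<Rightarrow> real set \<Rightarrow> (real \<Rightarrow> real \<Rightarrow> bool) \<Rightarrow> (nat \<Rightarrow> real) \<Rightarrow> bool" where
  "cyclic_hom n k W E h \<longleftrightarrow> 1 \<le> k \<and> 2 * k < n \<and>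
     (\<forall>i<n. h i \<in> W) \<and>
     (\<forall>i<n. \<forall>s\<in>{1..k}. E (h i) (h ((i + s) mod n))) \<and>
     (\<Sum>i<n. cdist (h i) (h ((i + 1) mod n))) = 1"

text \<open>Winding fraction of the (finite) induced subgraph on W (empty sup taken as 0).\<close>
definition wf_fin :: "real set \<Rightarrow> (real \<Rightarrow> real \<Rightarrow> bool) \<Rightarrow> real" where
  "wf_fin W E = Sup (insert 0 {real k / real n | k n. \<exists>h. cyclic_hom n k W E h})"

definition wf :: "real set \<Rightarrow> (real \<Rightarrow> real \<Rightarrow> bool) \<Rightarrow> real" where
  "wf V E = Sup {wf_fin W E | W. W \<subseteq> V \<and> finite W}"

definition gamma :: "real set \<Rightarrow> (real \<Rightarrow> real \<Rightarrow> bool) \<Rightarrow> nat \<Rightarrow> real \<Rightarrow> real" where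
  "gamma V E m v = Sup {(\<Sum>i<m. cdist (w i) (w (Suc i))) | w.
      w 0 = v \<and> (\<forall>i<m. w (Suc i) \<in> out_nbhd E (w i))}"

definition fm :: "real set \<Rightarrow> (real \<Rightarrow> real \<Rightarrow> bool) \<Rightarrow> nat \<Rightarrow> real \<Rightarrow> real" where
  "fm V E m v = frac (v + gamma V E m v)"

text \<open>Topology of S^1 via the quotient map R \<rightarrow> R/Z: V is closed in S^1 iff its
  preimage is closed in R; g on V is continuous iff g \<circ> quotient is continuous on the preimage.\<close>
definition lift :: "real set \<Rightarrow> real set" where
  "lift V = {x. frac x \<in> V}"

definition closed_graph :: "real set \<Rightarrow> bool" where
  "closed_graph V \<longleftrightarrow> closed (lift V)"

definition continuous_graph :: "real set \<Rightarrow> (real \<Rightarrow> real \<Rightarrow> bool) \<Rightarrow> bool" where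
  "continuous_graph V E \<longleftrightarrow> (\<forall>m. continuous_on (lift V) (\<lambda>x. gamma V E m (frac x)))"

end

theory Submission
  imports Defs
begin

primrec wk :: "(real \<Rightarrow> real \<Rightarrow> bool) \<Rightarrow> nat \<Rightarrow> real \<Rightarrow> real \<Rightarrow> real \<Rightarrow> bool" where
  "wk E 0 v u L \<longleftrightarrow> u = v \<and> L = 0"
| "wk E (Suc m) v u L \<longleftrightarrow> (\<exists>y L'. y \<in> out_nbhd E v \<and> wk E m y u L' \<and> L = cdist v y + L')"

lemma cdist_ge0: "0 \<le> cdist a b" by (simp add: cdist_def)
lemma cdist_lt1: "cdist a b < 1" by (simp add: cdist_def frac_lt_1)
lemma cdist_self: "cdist a a = 0" by (simp add: cdist_def)

lemma cdist_cases:
  assumes "0 \<le> a" "a < 1" "0 \<le> b" "b < 1"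
  shows "cdist a b = (if a \<le> b then b - a else b - a + 1)"
proof (cases "a \<le> b")
  case True
  then show ?thesis using assms by (simp add: cdist_def frac_eq)
next
  case False
  have "frac (b - a) = frac (b - a + 1)" by (simp add: frac_1_eq)
  also have "\<dots> = b - a + 1" using assms False by (simp add: frac_eq)
  finally show ?thesis using False by (simp add: cdist_def)
qed

lemma walk_eqv:
  "{(\<Sum>i<m. cdist (w i) (w (Suc i))) | w. w 0 = v \<and> (\<forall>i<m. w (Suc i) \<in> out_nbhd E (w i))}
   = {L. \<exists>u. wk E m v u L}"
proof (induction m arbitrary: v)
  case 0
  then show ?case by auto
next
  case (Suc m)
  show ?case
  proof (intro antisym subsetI)
    fix L assume "L \<in> {(\<Sum>i<Suc m. cdist (w i) (w (Suc i))) | w. w 0 = v \<and> (\<forall>i<Suc m. w (Suc i) \<in> out_nbhd E (w i))}"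
    then obtain w where w: "w 0 = v" "\<forall>i<Suc m. w (Suc i) \<in> out_nbhd E (w i)"
      and L: "L = (\<Sum>i<Suc m. cdist (w i) (w (Suc i)))" by blast
    have L2: "L = cdist v (w 1) + (\<Sum>i<m. cdist ((w \<circ> Suc) i) ((w \<circ> Suc) (Suc i)))"
      unfolding L sum.lessThan_Suc_shift using w by simp
    have "(\<Sum>i<m. cdist ((w \<circ> Suc) i) ((w \<circ> Suc) (Suc i))) \<in>
      {(\<Sum>i<m. cdist (x i) (x (Suc i))) | x. x 0 = w 1 \<and> (\<forall>i<m. x (Suc i) \<in> out_nbhd E (x i))}"
      apply (rule CollectI, rule exI[of _ "w \<circ> Suc"]) using w by auto
    then obtain u where "wk E m (w 1) u (\<Sum>i<m. cdist ((w \<circ> Suc) i) ((w \<circ> Suc) (Suc i)))"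
      using Suc.IH by blast
    moreover have "w 1 \<in> out_nbhd E v" using w by force
    ultimately show "L \<in> {L. \<exists>u. wk E (Suc m) v u L}" using L2 by auto
  next
    fix L assume "L \<in> {L. \<exists>u. wk E (Suc m) v u L}"
    then obtain u y L' where y: "y \<in> out_nbhd E v" "wk E m y u L'" "L = cdist v y + L'" by auto
    then have "L' \<in> {(\<Sum>i<m. cdist (w i) (w (Suc i))) | w. w 0 = y \<and> (\<forall>i<m. w (Suc i) \<in> out_nbhd E (w i))}"
      using Suc.IH by blast
    then obtain w' where w': "w' 0 = y" "\<forall>i<m. w' (Suc i) \<in> out_nbhd E (w' i)"
      "L' = (\<Sum>i<m. cdist (w' i) (w' (Suc i)))" by blast
    define w where "w = (\<lambda>k. if k = 0 then v else w' (k - 1))"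
    have "w 0 = v" by (simp add: w_def)
    moreover have "\<forall>i<Suc m. w (Suc i) \<in> out_nbhd E (w i)"
    proof (intro allI impI)
      fix i assume "i < Suc m"
      then show "w (Suc i) \<in> out_nbhd E (w i)"
        using w' y by (cases i) (auto simp: w_def)
    qed
    moreover have "L = (\<Sum>i<Suc m. cdist (w i) (w (Suc i)))"
      unfolding sum.lessThan_Suc_shift using w' y by (simp add: w_def)
    ultimately show "L \<in> {(\<Sum>i<Suc m. cdist (w i) (w (Suc i))) | w. w 0 = v \<and> (\<forall>i<Suc m. w (Suc i) \<in> out_nbhd E (w i))}"
      by blast
  qed
qed

lemma gamma_alt: "gamma V E m v = Sup {L. \<exists>u. wk E m v u L}"
  unfolding gamma_def walk_eqv ..

lemma wk_bound: "wk E m v u L \<Longrightarrow> L \<le> real m"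
proof (induction m arbitrary: v L)
  case 0 then show ?case by simp
next
  case (Suc m)
  then obtain y L' where "wk E m y u L'" "L = cdist v y + L'" by auto
  then show ?case using Suc.IH[of y L'] cdist_lt1[of v y] by simp
qed

lemma wk_refl: "wk E m v v 0"
proof (induction m)
  case 0 then show ?case by simp
next
  case (Suc m)
  have "v \<in> out_nbhd E v" by (simp add: out_nbhd_def)
  then show ?case using Suc by (metis add.right_neutral cdist_self wk.simps(2))
qed

lemma gamma_ge: "wk E m v u L \<Longrightarrow> L \<le> gamma V E m v"
  unfolding gamma_alt
  by (rule cSup_upper) (auto intro!: bdd_aboveI[of _ "real m"] dest: wk_bound)

lemma gamma_le: "(\<And>u L. wk E m v u L \<Longrightarrow> L \<le> c) \<Longrightarrow> gamma V E m v \<le> c"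
  unfolding gamma_alt
  by (rule cSup_least) (auto intro: wk_refl)

lemma gamma_approx:
  assumes "e > 0" shows "\<exists>u L. wk E m v u L \<and> gamma V E m v - e < L"
proof (rule ccontr)
  assume "\<not> ?thesis"
  then have "gamma V E m v \<le> gamma V E m v - e"
    by (intro gamma_le) force
  then show False using assms by simp
qed


lemma frac_shift: "frac (x - of_int k) = frac x"
  by (metis diff_conv_add_uminus frac_add_of_int_right of_int_minus)

lemma wk_V:
  assumes "digraph V E" "v \<in> V" "wk E m v u L"
  shows "u \<in> V \<and> frac (v + L) = u"
  using assms(2,3)
proof (induction m arbitrary: v L)
  case 0
  then show ?case using assms(1) by (auto simp: digraph_def)
next
  case (Suc m)
  then obtain y L' where y: "y \<in> out_nbhd E v" "wk E m y u L'" "L = cdist v y + L'" by auto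
  have yV: "y \<in> V" using y(1) Suc.prems assms(1) by (auto simp: out_nbhd_def digraph_def)
  from Suc.IH[OF yV y(2)] have IH: "u \<in> V" "frac (y + L') = u" by auto
  have "v + L = (y + L') - of_int \<lfloor>y - v\<rfloor>" using y(3) by (simp add: cdist_def frac_def)
  then have "frac (v + L) = frac (y + L')" by (simp add: frac_shift)
  then show ?case using IH by simp
qed

lemma wk_concat:
  "wk E (i + j) v z L \<longleftrightarrow> (\<exists>u L1 L2. wk E i v u L1 \<and> wk E j u z L2 \<and> L = L1 + L2)"
proof (induction i arbitrary: v L)
  case 0
  then show ?case by auto
next
  case (Suc i)
  show ?case
  proof
    assume "wk E (Suc i + j) v z L"
    then obtain y L' where y: "y \<in> out_nbhd E v" "wk E (i + j) y z L'" "L = cdist v y + L'" by auto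
    then obtain u L1 L2 where "wk E i y u L1" "wk E j u z L2" "L' = L1 + L2" using Suc.IH by blast
    then show "\<exists>u L1 L2. wk E (Suc i) v u L1 \<and> wk E j u z L2 \<and> L = L1 + L2"
      using y by (intro exI[of _ u] exI[of _ "cdist v y + L1"] exI[of _ L2]) auto
  next
    assume "\<exists>u L1 L2. wk E (Suc i) v u L1 \<and> wk E j u z L2 \<and> L = L1 + L2"
    then obtain u L1 L2 where a: "wk E (Suc i) v u L1" "wk E j u z L2" "L = L1 + L2" by blast
    then obtain y L' where y: "y \<in> out_nbhd E v" "wk E i y u L'" "L1 = cdist v y + L'" by auto
    have "wk E (i + j) y z (L' + L2)" using Suc.IH y a by blast
    then show "wk E (Suc i + j) v z L" using y a
      by (simp only: add_Suc wk.simps(2)) (intro exI[of _ y] exI[of _ "L' + L2"], auto)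
  qed
qed

lemma gamma_mono_Suc: "gamma V E m x \<le> gamma V E (Suc m) x"
proof (rule gamma_le)
  fix z L assume "wk E m x z L"
  then have "wk E (Suc m) x z (cdist x x + L)" by (auto simp: out_nbhd_def)
  then show "L \<le> gamma V E (Suc m) x" using gamma_ge cdist_self by fastforce
qed

lemma arith1: "(cuy::real) = (if u \<le> y then y - u else y - u + 1) \<Longrightarrow> cux = (if u \<le> x then x - u else x - u + 1)
  \<Longrightarrow> cyx = (if y \<le> x then x - y else x - y + 1) \<Longrightarrow> cuy \<le> cux \<Longrightarrow> 0 \<le> u \<Longrightarrow> u < 1 \<Longrightarrow> 0 \<le> x \<Longrightarrow> x < 1 \<Longrightarrow> 0 \<le> y \<Longrightarrow> y < 1
  \<Longrightarrow> cyx = cux - cuy"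
  by (cases "u \<le> y"; cases "u \<le> x"; cases "y \<le> x"; simp)

lemma arith2: "(cux::real) = (if u \<le> x then x - u else x - u + 1) \<Longrightarrow> cux = 0 \<Longrightarrow> 0 \<le> u \<Longrightarrow> u < 1 \<Longrightarrow> 0 \<le> x \<Longrightarrow> x < 1
  \<Longrightarrow> x = u"
  by (cases "u \<le> x"; simp)

lemma arith3: "(cuy::real) = (if u \<le> y then y - u else y - u + 1) \<Longrightarrow> cux = (if u \<le> x then x - u else x - u + 1)
  \<Longrightarrow> cxy = (if x \<le> y then y - x else y - x + 1) \<Longrightarrow> \<not> cuy \<le> cux \<Longrightarrow> 0 \<le> u \<Longrightarrow> u < 1 \<Longrightarrow> 0 \<le> x \<Longrightarrow> x < 1 \<Longrightarrow> 0 \<le> y \<Longrightarrow> y < 1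
  \<Longrightarrow> cxy = cuy - cux"
  by (cases "u \<le> y"; cases "u \<le> x"; cases "x \<le> y"; simp)

lemma gamma_shift:
  assumes cyc: "cyclic_graph V E" and "u \<in> V" "x \<in> V"
  shows "gamma V E m u \<le> cdist u x + gamma V E m x"
  using assms(2,3)
proof (induction m arbitrary: u x)
  case 0
  have "gamma V E 0 u \<le> 0" by (rule gamma_le) simp
  moreover have "0 \<le> gamma V E 0 x" using gamma_ge[OF wk_refl] .
  ultimately show ?case using cdist_ge0[of u x] by simp
next
  case (Suc m)
  have dg: "digraph V E" using cyc by (simp add: cyclic_graph_def)
  have V01: "V \<subseteq> {0..<1}" using dg by (simp add: digraph_def)
  show ?case
  proof (rule gamma_le)
    fix z L assume "wk E (Suc m) u z L"
    then obtain y L' where y: "y \<in> out_nbhd E u" "wk E m y z L'" "L = cdist u y + L'" by auto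
    have yV: "y \<in> V" using y(1) Suc.prems dg by (auto simp: out_nbhd_def digraph_def)
    have L'le: "L' \<le> cdist y x + gamma V E m x"
      using gamma_ge[OF y(2), of V] Suc.IH[OF yV Suc.prems(2)] by linarith
    have r: "0 \<le> u" "u < 1" "0 \<le> x" "x < 1" "0 \<le> y" "y < 1"
      using V01 yV Suc.prems by auto
    note cuy = cdist_cases[OF r(1,2,5,6)] and cux = cdist_cases[OF r(1,2,3,4)]
      and cyx = cdist_cases[OF r(5,6,3,4)] and cxy = cdist_cases[OF r(3,4,5,6)]
    show "L \<le> cdist u x + gamma V E (Suc m) x"
    proof (cases "cdist u y \<le> cdist u x")
      case True
      have "cdist y x = cdist u x - cdist u y" by (rule arith1[OF cuy cux cyx True r])
      then show ?thesis using y(3) L'le gamma_mono_Suc[of V E m x] by linarith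
    next
      case False
      then have "y \<noteq> u" using cdist_self[of u] cdist_ge0[of u x] by auto
      then have Euy: "E u y" using y(1) by (auto simp: out_nbhd_def)
      show ?thesis
      proof (cases "cdist u x = 0")
        case True
        have "x = u" by (rule arith2[OF cux True r(1-4)])
        then show ?thesis using True gamma_ge[of E "Suc m" u z L V] \<open>wk E (Suc m) u z L\<close> by simp
      next
        case False
        have cb: "cbetween u x y" using False \<open>\<not> cdist u y \<le> cdist u x\<close> cdist_ge0[of u x]
          by (simp add: cbetween_def)
        have cyc2: "\<forall>v\<in>V. \<forall>u\<in>V. \<forall>w\<in>V. E v u \<and> cbetween v w u \<longrightarrow> E v w \<and> E w u"
          using cyc[unfolded cyclic_graph_def] by (rule conjunct2)
        have "E u x \<and> E x y" using cyc2[rule_format, OF Suc.prems(1) yV Suc.prems(2)] Euy cb by blast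
        then have "E x y" by blast
        then have "wk E (Suc m) x z (cdist x y + L')" using y(2) by (auto simp: out_nbhd_def)
        then have "cdist x y + L' \<le> gamma V E (Suc m) x" by (rule gamma_ge)
        moreover have "cdist x y = cdist u y - cdist u x"
          by (rule arith3[OF cuy cux cxy \<open>\<not> cdist u y \<le> cdist u x\<close> r])
        ultimately show ?thesis using y(3) by linarith
      qed
    qed
  qed
qed

lemma gamma_mono_lift:
  assumes cyc: "cyclic_graph V E" and "frac U \<in> V" "frac X \<in> V" "U \<le> X"
  shows "U + gamma V E m (frac U) \<le> X + gamma V E m (frac X)"
proof -
  have "cdist (frac U) (frac X) = frac (X - U)"
  proof -
    have "frac X - frac U = (X - U) - of_int (\<lfloor>X\<rfloor> - \<lfloor>U\<rfloor>)" by (simp add: frac_def)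
    then show ?thesis unfolding cdist_def by (metis frac_shift)
  qed
  moreover have "frac (X - U) \<le> X - U" using assms(4) by (simp add: frac_def)
  ultimately show ?thesis using gamma_shift[OF cyc assms(2,3), of m] by linarith
qed


theorem mainTheorem10:
  fixes V :: "real set" and E :: "real \<Rightarrow> real \<Rightarrow> bool" and p q :: nat
  assumes "cyclic_graph V E"
    and "closed_graph V"
    and "continuous_graph V E"
    and "q > 0"
    and "wf V E = real p / real q"
  shows "\<forall>v\<in>V. \<forall>i j. fm V E i v \<in> V
           \<and> gamma V E (i + j) v = gamma V E i v + gamma V E j (fm V E i v)
           \<and> fm V E (i + j) v = fm V E j (fm V E i v)"
proof -
  have cyc: "cyclic_graph V E" by fact
  have dg: "digraph V E" using cyc[unfolded cyclic_graph_def] by (rule conjunct1)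
  have cl: "closed (lift V)" using assms(2) by (simp add: closed_graph_def)
  have ct: "\<And>m. continuous_on (lift V) (\<lambda>x. gamma V E m (frac x))"
    using assms(3) by (simp add: continuous_graph_def)
  have P1: "frac (v + gamma V E i v) \<in> V" if vV: "v \<in> V" for v i
  proof -
    have "\<forall>e>0. \<exists>y\<in>lift V. dist y (v + gamma V E i v) < e"
    proof (intro allI impI)
      fix e :: real assume "e > 0"
      then obtain u L where w: "wk E i v u L" "gamma V E i v - e < L" using gamma_approx by blast
      have "L \<le> gamma V E i v" using gamma_ge[OF w(1)] .
      moreover have "frac (v + L) \<in> V" using wk_V[OF dg vV w(1)] by simp
      ultimately show "\<exists>y\<in>lift V. dist y (v + gamma V E i v) < e"
        using w(2) by (intro bexI[of _ "v + L"]) (auto simp: lift_def dist_real_def)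
    qed
    then have "v + gamma V E i v \<in> lift V" using closed_approachable[OF cl] by blast
    then show ?thesis by (simp add: lift_def)
  qed
  have P2: "gamma V E (i + j) v = gamma V E i v + gamma V E j (frac (v + gamma V E i v))"
    if vV: "v \<in> V" for v i j
  proof (rule antisym)
    define F where "F = v + gamma V E i v"
    have FV: "frac F \<in> V" using P1[OF vV] by (simp add: F_def)
    show "gamma V E (i + j) v \<le> gamma V E i v + gamma V E j (frac (v + gamma V E i v))"
    proof (rule gamma_le)
      fix z L assume "wk E (i + j) v z L"
      then obtain u L1 L2 where w: "wk E i v u L1" "wk E j u z L2" "L = L1 + L2"
        using wk_concat by blast
      have uV: "u \<in> V" "frac (v + L1) = u" using wk_V[OF dg vV w(1)] by auto
      have "L1 \<le> gamma V E i v" using gamma_ge[OF w(1)] .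
      moreover have "L2 \<le> gamma V E j u" using gamma_ge[OF w(2)] .
      moreover have "v + L1 + gamma V E j (frac (v + L1)) \<le> F + gamma V E j (frac F)"
        using gamma_mono_lift[OF cyc _ FV, of "v + L1" j] uV \<open>L1 \<le> gamma V E i v\<close>
        by (simp add: F_def)
      ultimately show "L \<le> gamma V E i v + gamma V E j (frac (v + gamma V E i v))"
        using w(3) uV by (simp add: F_def)
    qed
  next
    define F where "F = v + gamma V E i v"
    have FV: "F \<in> lift V" using P1[OF vV] by (simp add: F_def lift_def)
    show "gamma V E i v + gamma V E j (frac (v + gamma V E i v)) \<le> gamma V E (i + j) v"
    proof (rule field_le_epsilon)
      fix e :: real assume "0 < e"
      define \<epsilon> where "\<epsilon> = e / 3"
      have "\<epsilon> > 0" using \<open>0 < e\<close> by (simp add: \<epsilon>_def)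
      obtain d where d: "d > 0" "\<forall>x'\<in>lift V. dist x' F < d \<longrightarrow>
          dist (gamma V E j (frac x')) (gamma V E j (frac F)) < \<epsilon>"
        using ct[of j] FV \<open>\<epsilon> > 0\<close> unfolding continuous_on_iff by blast
      have "min d \<epsilon> > 0" using d(1) \<open>\<epsilon> > 0\<close> by simp
      then obtain u L1 where w1: "wk E i v u L1" "gamma V E i v - min d \<epsilon> < L1"
        using gamma_approx by blast
      have L1le: "L1 \<le> gamma V E i v" using gamma_ge[OF w1(1)] .
      have uV: "u \<in> V" "frac (v + L1) = u" using wk_V[OF dg vV w1(1)] by auto
      have "v + L1 \<in> lift V" using uV by (simp add: lift_def)
      moreover have "dist (v + L1) F < d" using w1(2) L1le by (simp add: F_def dist_real_def)
      ultimately have "dist (gamma V E j u) (gamma V E j (frac F)) < \<epsilon>"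
        using d(2) uV by force
      then have g1: "gamma V E j (frac F) < gamma V E j u + \<epsilon>" by (simp add: dist_real_def)
      obtain z L2 where w2: "wk E j u z L2" "gamma V E j u - \<epsilon> < L2"
        using gamma_approx \<open>\<epsilon> > 0\<close> by blast
      have "wk E (i + j) v z (L1 + L2)" using wk_concat w1(1) w2(1) by blast
      then have "L1 + L2 \<le> gamma V E (i + j) v" by (rule gamma_ge)
      then show "gamma V E i v + gamma V E j (frac (v + gamma V E i v)) \<le> gamma V E (i + j) v + e"
        using g1 w1(2) w2(2) by (simp add: F_def \<epsilon>_def)
    qed
  qed
  show ?thesis
  proof (intro ballI allI conjI)
    fix v i j assume vV: "v \<in> V"
    show "fm V E i v \<in> V" using P1[OF vV] by (simp add: fm_def)
    show "gamma V E (i + j) v = gamma V E i v + gamma V E j (fm V E i v)"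
      using P2[OF vV] by (simp add: fm_def)
    define a where "a = v + gamma V E i v"
    define g where "g = gamma V E j (frac a)"
    have e1: "fm V E (i + j) v = frac (a + g)"
      using P2[OF vV, of i j] by (simp add: fm_def a_def g_def add.assoc)
    have e2: "fm V E j (fm V E i v) = frac (frac a + g)"
      by (simp add: fm_def a_def g_def)
    have "frac a + g = (a + g) - of_int \<lfloor>a\<rfloor>" by (simp add: frac_def)
    then have "frac (frac a + g) = frac (a + g)" by (metis frac_shift)
    then show "fm V E (i + j) v = fm V E j (fm V E i v)" using e1 e2 by simp
  qed
qed

end
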